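(* Let an ordered storyline instance be given and let $\Delta,\overline{\Delta}\in\mathbb{N}$. Consider the polyhedron $P$ in the variables $y_{t,c}$ ($t\in[\ell]$, $c\in\mathrm{Ac}(t)$) and $w_{t,c}$ ($t\in[\ell-1]$, $c\in\mathrm{Ac}(t)\cap\mathrm{Ac}(t+1)$) defined by the constraints: $y_{t,c'}-y_{t,c}=\Delta$ for all $t\in[\ell]$ and $(c,c')\in N_{\mathcal{M}}(t)$; $y_{t,c'}-y_{t,c}\ge\overline{\Delta}$ for all $t\in[\ell]$ and $(c,c')\in N_A(t)$; $y_{t,c}-y_{t+1,c}\le w_{t,c}$ and $y_{t+1,c}-y_{t,c}\le w_{t,c}$ for all $t\in[\ell-1]$, $c\in\mathrm{Ac}(t)\cap\mathrm{Ac}(t+1)$; and $y_{t,c}\ge 0$ for all $t\in[\ell]$, $c\in\mathrm{Ac}(t)$. Then every extreme point of $P$ is integral.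
   Context: Write $[n]=\{1,\dots,n\}$. An ordered storyline instance consists of characters $\mathcal{C}$, time steps $[\ell]$, meetings $\mathcal{M}$ (each meeting $M$ has a time step $\mathrm{tm}(M)$ and character set $\mathrm{char}(M)$), for each character $c$ a set $A(c)$ of consecutive active time steps, and for each $t$ a permutation $\pi_t$ of the active characters $\mathrm{Ac}(t)=\{c: t\in A(c)\}$ in which the characters of each meeting at time $t$ are consecutive; $c\prec_t c'$ means $c$ precedes $c'$ in $\pi_t$. For $t\in[\ell]$: $N(t)$ is the set of pairs $(c,c')$ of characters consecutive in $\pi_t$ with $c\prec_t c'$; $N_{\mathcal{M}}(t)$ is the set of pairs in $N(t)$ whose two characters belong to a common meeting at time step $t$; $N_A(t)=N(t)\setminus N_{\mathcal{M}}(t)$. *)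

theory Defs
  imports "HOL-Analysis.Analysis"
begin

text \<open>Ordered storyline instance: characters \<open>Cs\<close>, time steps \<open>{1..l}\<close>,
 meetings \<open>Ms\<close> with time \<open>tm\<close> and character set \<open>chr\<close>, active sets \<open>A\<close>,
 and for every time step a list \<open>\<pi>s t\<close> representing the permutation of the
 active characters.\<close>

definition Ac :: "'c set \<Rightarrow> ('c \<Rightarrow> nat set) \<Rightarrow> nat \<Rightarrow> 'c set" where
  "Ac Cs A t = {c \<in> Cs. t \<in> A c}"

definition ordered_storyline ::
  "'c set \<Rightarrow> nat \<Rightarrow> 'm set \<Rightarrow> ('m \<Rightarrow> nat) \<Rightarrow> ('m \<Rightarrow> 'c set) \<Rightarrow> ('c \<Rightarrow> nat set)
   \<Rightarrow> (nat \<Rightarrow> 'c list) \<Rightarrow> bool" where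
  "ordered_storyline Cs l Ms tm chr A \<pi>s \<longleftrightarrow>
     finite Cs \<and> finite Ms \<and>
     (\<forall>M\<in>Ms. tm M \<in> {1..l} \<and> chr M \<subseteq> Cs) \<and>
     (\<forall>c\<in>Cs. (\<exists>a b. A c = {a..b}) \<and> A c \<subseteq> {1..l}) \<and>
     (\<forall>M\<in>Ms. \<forall>c\<in>chr M. tm M \<in> A c) \<and>
     (\<forall>t\<in>{1..l}. distinct (\<pi>s t) \<and> set (\<pi>s t) = Ac Cs A t) \<and>
     (\<forall>M\<in>Ms. \<exists>i j. chr M = set (take (j - i) (drop i (\<pi>s (tm M)))))"

definition Nb :: "(nat \<Rightarrow> 'c list) \<Rightarrow> nat \<Rightarrow> ('c \<times> 'c) set" where
  "Nb \<pi>s t = {(\<pi>s t ! i, \<pi>s t ! Suc i) | i. Suc i < length (\<pi>s t)}"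

definition NM :: "(nat \<Rightarrow> 'c list) \<Rightarrow> 'm set \<Rightarrow> ('m \<Rightarrow> nat) \<Rightarrow> ('m \<Rightarrow> 'c set)
   \<Rightarrow> nat \<Rightarrow> ('c \<times> 'c) set" where
  "NM \<pi>s Ms tm chr t = {(c, c') \<in> Nb \<pi>s t. \<exists>M\<in>Ms. tm M = t \<and> c \<in> chr M \<and> c' \<in> chr M}"

definition NA :: "(nat \<Rightarrow> 'c list) \<Rightarrow> 'm set \<Rightarrow> ('m \<Rightarrow> nat) \<Rightarrow> ('m \<Rightarrow> 'c set)
   \<Rightarrow> nat \<Rightarrow> ('c \<times> 'c) set" where
  "NA \<pi>s Ms tm chr t = Nb \<pi>s t - NM \<pi>s Ms tm chr t"

datatype 'c var = Y nat 'c | W nat 'c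

definition vars :: "'c set \<Rightarrow> ('c \<Rightarrow> nat set) \<Rightarrow> nat \<Rightarrow> 'c var set" where
  "vars Cs A l = {Y t c | t c. t \<in> {1..l} \<and> c \<in> Ac Cs A t}
     \<union> {W t c | t c. t \<in> {1..l-1} \<and> c \<in> Ac Cs A t \<inter> Ac Cs A (Suc t)}"

text \<open>The polyhedron \<open>P \<subseteq> \<real>^{vars}\<close>; a point is a real function on variables
 vanishing outside the variable set (canonical embedding of \<open>\<real>^{vars}\<close>).\<close>
definition polyP ::
  "'c set \<Rightarrow> nat \<Rightarrow> 'm set \<Rightarrow> ('m \<Rightarrow> nat) \<Rightarrow> ('m \<Rightarrow> 'c set) \<Rightarrow> ('c \<Rightarrow> nat set)
   \<Rightarrow> (nat \<Rightarrow> 'c list) \<Rightarrow> nat \<Rightarrow> nat \<Rightarrow> ('c var \<Rightarrow> real) set" where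
  "polyP Cs l Ms tm chr A \<pi>s \<Delta> \<Delta>b = {x.
     (\<forall>v. v \<notin> vars Cs A l \<longrightarrow> x v = 0) \<and>
     (\<forall>t\<in>{1..l}. \<forall>(c, c')\<in>NM \<pi>s Ms tm chr t. x (Y t c') - x (Y t c) = real \<Delta>) \<and>
     (\<forall>t\<in>{1..l}. \<forall>(c, c')\<in>NA \<pi>s Ms tm chr t. x (Y t c') - x (Y t c) \<ge> real \<Delta>b) \<and>
     (\<forall>t\<in>{1..l-1}. \<forall>c\<in>Ac Cs A t \<inter> Ac Cs A (Suc t).
        x (Y t c) - x (Y (Suc t) c) \<le> x (W t c) \<and> x (Y (Suc t) c) - x (Y t c) \<le> x (W t c)) \<and>
     (\<forall>t\<in>{1..l}. \<forall>c\<in>Ac Cs A t. x (Y t c) \<ge> 0)}"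

definition extreme_pt :: "('v \<Rightarrow> real) \<Rightarrow> ('v \<Rightarrow> real) set \<Rightarrow> bool" where
  "extreme_pt x S \<longleftrightarrow> x \<in> S \<and>
     (\<forall>a\<in>S. \<forall>b\<in>S. \<forall>u::real. 0 < u \<and> u < 1 \<and> x = (\<lambda>v. u * a v + (1 - u) * b v) \<longrightarrow> a = b)"

end

theory Submission
  imports Defs
begin

lemma dist_int:
  fixes a b e \<theta> :: real and k :: int
  assumes "frac a = \<theta>" "frac b \<noteq> \<theta>" "e \<le> \<theta>" "e \<le> 1 - \<theta>" "e \<le> \<bar>\<theta> - frac b\<bar>"
  shows "e \<le> \<bar>a - b - of_int k\<bar>"
proof -
  define m where "m = \<lfloor>a\<rfloor> - \<lfloor>b\<rfloor> - k"
  have eq: "a - b - of_int k = of_int m + (\<theta> - frac b)"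
    using assms(1) by (simp add: m_def frac_def)
  have b: "0 \<le> frac b" "frac b < 1" by (simp_all add: frac_lt_1)
  consider "m = 0" | "m \<ge> 1" | "m \<le> -1" by linarith
  then show ?thesis
  proof cases
    case 1 then show ?thesis using eq assms by simp
  next
    case 2
    then have "real_of_int m \<ge> 1" by simp
    then show ?thesis using eq assms b by linarith
  next
    case 3
    then have "real_of_int m \<le> -1" by simp
    then show ?thesis using eq assms b by linarith
  qed
qed

lemma dist_Ints:
  fixes a b e \<theta> n :: real
  assumes "frac a = \<theta>" "frac b \<noteq> \<theta>" "e \<le> \<theta>" "e \<le> 1 - \<theta>" "e \<le> \<bar>\<theta> - frac b\<bar>" "n \<in> \<int>"
  shows "e \<le> \<bar>a - b - n\<bar>"
  using assms(6) dist_int[OF assms(1-5)] by (auto elim: Ints_cases)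

lemma ge_shift:
  fixes u e :: real
  assumes "\<forall>n\<in>\<int>. e \<le> \<bar>u - n\<bar>" "u \<ge> real K" "s = 1 \<or> s = -1" "\<sigma> \<in> {-1,0,1::real}" "0 < e"
  shows "u + s * e * \<sigma> \<ge> real K"
proof -
  have "e \<le> \<bar>u - real K\<bar>" using assms(1) Ints_of_nat by blast
  then show ?thesis using assms(2-5) by (auto simp: abs_if split: if_splits)
qed

lemma abs_avg:
  fixes u e \<sigma> :: real
  assumes "e \<le> \<bar>u\<bar>" "0 < e" "\<sigma> \<in> {-1,1}"
  shows "\<bar>u\<bar> = 1/2 * \<bar>u + 1 * e * \<sigma>\<bar> + (1 - 1/2) * \<bar>u + (-1) * e * \<sigma>\<bar>"
  using assms by (auto simp: abs_if field_simps)

lemma Ints_abs': "(z::real) \<in> \<int> \<Longrightarrow> \<bar>z\<bar> \<in> \<int>"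
  by (cases "z < 0") simp_all

lemma fin_vars:
  assumes "finite Cs"
  shows "finite (vars Cs A l)"
proof -
  have "vars Cs A l \<subseteq> (\<lambda>(t,c). Y t c) ` ({1..l} \<times> Cs) \<union> (\<lambda>(t,c). W t c) ` ({1..l} \<times> Cs)"
    by (auto simp: vars_def Ac_def)
  then show ?thesis using assms by (meson finite_subset finite_UnI finite_imageI finite_SigmaI finite_atLeastAtMost)
qed

lemma W_vars:
  "W t c \<in> vars Cs A l \<longleftrightarrow> t \<in> {1..l-1} \<and> c \<in> Ac Cs A t \<inter> Ac Cs A (Suc t)"
  by (auto simp: vars_def)

lemma Y_vars:
  "Y t c \<in> vars Cs A l \<longleftrightarrow> t \<in> {1..l} \<and> c \<in> Ac Cs A t"
  by (auto simp: vars_def)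

lemma step1:
  assumes ext: "extreme_pt x (polyP Cs l Ms tm chr A \<pi>s \<Delta> \<Delta>b)"
    and wv: "W t c \<in> vars Cs A l"
  shows "x (W t c) = \<bar>x (Y t c) - x (Y (Suc t) c)\<bar>"
proof (rule ccontr)
  let ?P = "polyP Cs l Ms tm chr A \<pi>s \<Delta> \<Delta>b"
  assume ne: "\<not> ?thesis"
  have xP: "x \<in> ?P" using ext by (simp add: extreme_pt_def)
  have tc: "t \<in> {1..l-1}" "c \<in> Ac Cs A t \<inter> Ac Cs A (Suc t)" using wv by (simp_all add: W_vars)
  have "x (Y t c) - x (Y (Suc t) c) \<le> x (W t c) \<and> x (Y (Suc t) c) - x (Y t c) \<le> x (W t c)" using xP tc
    unfolding polyP_def by auto
  then have ge: "x (W t c) \<ge> \<bar>x (Y t c) - x (Y (Suc t) c)\<bar>" by linarith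
  define s where "s = x (W t c) - \<bar>x (Y t c) - x (Y (Suc t) c)\<bar>"
  have s: "s > 0" using ge ne s_def by auto
  define a where "a = x(W t c := x (W t c) + s)"
  define b where "b = x(W t c := x (W t c) - s)"
  have aP: "a \<in> ?P"
    using xP wv s ge unfolding a_def polyP_def by (auto simp: s_def)
  have bP: "b \<in> ?P"
    using xP wv s ge unfolding b_def polyP_def by (auto simp: s_def)
  have "x = (\<lambda>v. 1/2 * a v + (1 - 1/2) * b v)"
  proof
    fix v show "x v = 1/2 * a v + (1 - 1/2) * b v"
      by (cases "v = W t c") (simp_all add: a_def b_def field_simps)
  qed
  moreover have "a \<noteq> b"
  proof
    assume "a = b"
    then have "a (W t c) = b (W t c)" by simp
    then show False using s by (simp add: a_def b_def)
  qed
  moreover have "\<forall>a'\<in>?P. \<forall>b'\<in>?P. \<forall>u::real. 0 < u \<and> u < 1 \<and> x = (\<lambda>v. u * a' v + (1 - u) * b' v) \<longrightarrow> a' = b'"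
    using ext unfolding extreme_pt_def by blast
  moreover have "0 < (1/2::real) \<and> (1/2::real) < 1" by simp
  ultimately show False using aP bP by blast
qed

theorem proposition1:
  fixes Cs :: "'c set" and l :: nat and Ms :: "'m set" and tm :: "'m \<Rightarrow> nat"
    and chr :: "'m \<Rightarrow> 'c set" and A :: "'c \<Rightarrow> nat set" and \<pi>s :: "nat \<Rightarrow> 'c list"
    and \<Delta> \<Delta>b :: nat and x :: "'c var \<Rightarrow> real"
  assumes "ordered_storyline Cs l Ms tm chr A \<pi>s"
    and "extreme_pt x (polyP Cs l Ms tm chr A \<pi>s \<Delta> \<Delta>b)"
  shows "\<forall>v. x v \<in> \<int>"
proof -
  let ?P = "polyP Cs l Ms tm chr A \<pi>s \<Delta> \<Delta>b"
  have xP: "x \<in> ?P" using assms(2) by (simp add: extreme_pt_def)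
  have finC: "finite Cs" using assms(1) by (simp add: ordered_storyline_def)
  have fin: "finite (vars Cs A l)" using fin_vars[OF finC] .
  have xout: "x v = 0" if "v \<notin> vars Cs A l" for v using xP that by (simp add: polyP_def)
  have wabs: "x (W t c) = \<bar>x (Y t c) - x (Y (Suc t) c)\<bar>" if "W t c \<in> vars Cs A l" for t c
    using step1[OF assms(2) that] .
  have yint: "x (Y t0 c0) \<in> \<int>" for t0 c0
  proof (rule ccontr)
    assume nint: "x (Y t0 c0) \<notin> \<int>"
    define \<theta> where "\<theta> = frac (x (Y t0 c0))"
    have \<theta>0: "0 < \<theta>" "\<theta> < 1" using nint by (simp_all add: \<theta>_def frac_lt_1)
    define X where "X = {\<theta>, 1-\<theta>} \<union> (\<lambda>v. \<bar>\<theta> - frac (x v)\<bar>) ` {v \<in> vars Cs A l. frac (x v) \<noteq> \<theta>}"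
    have finX: "finite X" using fin by (simp add: X_def)
    have posX: "\<forall>r\<in>X. 0 < r" using \<theta>0 by (auto simp: X_def)
    define \<epsilon> where "\<epsilon> = Min X"
    have ne: "X \<noteq> {}" by (simp add: X_def)
    have \<epsilon>0: "0 < \<epsilon>" using finX posX ne by (simp add: \<epsilon>_def)
    have \<epsilon>le: "\<forall>r\<in>X. \<epsilon> \<le> r" using finX by (simp add: \<epsilon>_def)
    have e1: "\<epsilon> \<le> \<theta>" "\<epsilon> \<le> 1 - \<theta>" using \<epsilon>le X_def by auto
    have e2: "\<epsilon> \<le> \<bar>\<theta> - frac (x v)\<bar>" if "frac (x v) \<noteq> \<theta>" for v
    proof (cases "v \<in> vars Cs A l")
      case True then show ?thesis using \<epsilon>le that by (auto simp: X_def)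
    next
      case False then have "x v = 0" by (rule xout)
      then show ?thesis using e1 \<theta>0 by simp
    qed
    define ind where "ind v = (if frac (x v) = \<theta> then 1 else (0::real))" for v
    define g where "g s v = x v + s * \<epsilon> * ind v" for s v
    define xp where "xp s = (\<lambda>v. case v of Y t c \<Rightarrow> g s (Y t c)
       | W t c \<Rightarrow> if W t c \<in> vars Cs A l then \<bar>g s (Y t c) - g s (Y (Suc t) c)\<bar> else 0)" for s
    have gdiff: "g s p - g s q = x p - x q + s * \<epsilon> * (ind p - ind q)" for s p q
      by (simp add: g_def algebra_simps)
    have indv: "ind p - ind q \<in> {-1,0,1}" for p q by (simp add: ind_def)
    have far: "\<forall>n\<in>\<int>. \<epsilon> \<le> \<bar>x p - x q - n\<bar>" if "ind p \<noteq> ind q" for p q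
    proof
      fix n :: real assume n: "n \<in> \<int>"
      show "\<epsilon> \<le> \<bar>x p - x q - n\<bar>"
      proof (cases "frac (x p) = \<theta>")
        case True
        then have "frac (x q) \<noteq> \<theta>" using that by (simp add: ind_def split: if_splits)
        then show ?thesis using dist_Ints[OF True _ e1 e2 n] by simp
      next
        case False
        then have q: "frac (x q) = \<theta>" using that by (simp add: ind_def split: if_splits)
        have "-n \<in> \<int>" using n by simp
        from dist_Ints[OF q False e1 e2[OF False] this] show ?thesis by arith
      qed
    qed
    have nonneg: "0 \<le> g s p" if "0 \<le> x p" "s = 1 \<or> s = -1" for s p
    proof (cases "frac (x p) = \<theta>")
      case True
      have f0: "frac 0 \<noteq> \<theta>" using \<theta>0 by simp
      have "\<epsilon> \<le> \<bar>\<theta> - frac 0\<bar>" using e1 \<theta>0 by simp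
      from dist_Ints[OF True f0 e1 this Ints_0] have "\<epsilon> \<le> \<bar>x p - 0 - 0\<bar>" .
      then show ?thesis using that True \<epsilon>0 by (auto simp: g_def ind_def)
    next
      case False then show ?thesis using that by (simp add: g_def ind_def)
    qed
    have xpP: "xp s \<in> ?P" if s: "s = 1 \<or> s = -1" for s
    proof -
      have c1: "\<forall>v. v \<notin> vars Cs A l \<longrightarrow> xp s v = 0"
      proof (intro allI impI)
        fix v assume v: "v \<notin> vars Cs A l"
        show "xp s v = 0"
        proof (cases v)
          case (Y t c)
          then have "x v = 0" using xout v by simp
          then show ?thesis using Y \<theta>0 by (simp add: xp_def g_def ind_def)
        next
          case (W t c) then show ?thesis using v by (simp add: xp_def)
        qed
      qed
      have c2: "\<forall>t\<in>{1..l}. \<forall>(c, c')\<in>NM \<pi>s Ms tm chr t. xp s (Y t c') - xp s (Y t c) = real \<Delta>"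
      proof (intro ballI, clarify)
        fix t c c' assume t: "t \<in> {1..l}" and cc: "(c, c') \<in> NM \<pi>s Ms tm chr t"
        have eq: "x (Y t c') - x (Y t c) = real \<Delta>" using xP t cc by (auto simp: polyP_def)
        have "ind (Y t c') = ind (Y t c)"
        proof (rule ccontr)
          assume "ind (Y t c') \<noteq> ind (Y t c)"
          from far[OF this] have "\<epsilon> \<le> \<bar>x (Y t c') - x (Y t c) - real \<Delta>\<bar>" by simp
          then show False using eq \<epsilon>0 by simp
        qed
        then show "xp s (Y t c') - xp s (Y t c) = real \<Delta>" using gdiff[of s "Y t c'" "Y t c"] eq
          by (simp add: xp_def)
      qed
      have c3: "\<forall>t\<in>{1..l}. \<forall>(c, c')\<in>NA \<pi>s Ms tm chr t. xp s (Y t c') - xp s (Y t c) \<ge> real \<Delta>b"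
      proof (intro ballI, clarify)
        fix t c c' assume t: "t \<in> {1..l}" and cc: "(c, c') \<in> NA \<pi>s Ms tm chr t"
        have ge: "x (Y t c') - x (Y t c) \<ge> real \<Delta>b" using xP t cc by (auto simp: polyP_def)
        show "xp s (Y t c') - xp s (Y t c) \<ge> real \<Delta>b"
        proof (cases "ind (Y t c') = ind (Y t c)")
          case True then show ?thesis using gdiff[of s "Y t c'" "Y t c"] ge by (simp add: xp_def)
        next
          case False
          from ge_shift[OF far[OF False] ge s indv[of "Y t c'" "Y t c"] \<epsilon>0]
          have h: "x (Y t c') - x (Y t c) + s * \<epsilon> * (ind (Y t c') - ind (Y t c)) \<ge> real \<Delta>b" .
          have "xp s (Y t c') - xp s (Y t c) = g s (Y t c') - g s (Y t c)" by (simp add: xp_def)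
          then show ?thesis using gdiff[of s "Y t c'" "Y t c"] h by linarith
        qed
      qed
      have c4: "\<forall>t\<in>{1..l-1}. \<forall>c\<in>Ac Cs A t \<inter> Ac Cs A (Suc t).
        xp s (Y t c) - xp s (Y (Suc t) c) \<le> xp s (W t c) \<and> xp s (Y (Suc t) c) - xp s (Y t c) \<le> xp s (W t c)"
      proof (intro ballI)
        fix t c assume "t \<in> {1..l-1}" "c \<in> Ac Cs A t \<inter> Ac Cs A (Suc t)"
        then have "W t c \<in> vars Cs A l" by (simp add: W_vars)
        then show "xp s (Y t c) - xp s (Y (Suc t) c) \<le> xp s (W t c) \<and> xp s (Y (Suc t) c) - xp s (Y t c) \<le> xp s (W t c)"
          by (simp add: xp_def) linarith
      qed
      have c5: "\<forall>t\<in>{1..l}. \<forall>c\<in>Ac Cs A t. xp s (Y t c) \<ge> 0"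
      proof (intro ballI)
        fix t c assume "t \<in> {1..l}" "c \<in> Ac Cs A t"
        then have "x (Y t c) \<ge> 0" using xP by (simp add: polyP_def)
        then show "xp s (Y t c) \<ge> 0" using nonneg s by (simp add: xp_def)
      qed
      show ?thesis unfolding polyP_def mem_Collect_eq using c1 c2 c3 c4 c5 by blast
    qed
    have avg: "x = (\<lambda>v. 1/2 * xp 1 v + (1 - 1/2) * xp (-1) v)"
    proof
      fix v show "x v = 1/2 * xp 1 v + (1 - 1/2) * xp (-1) v"
      proof (cases v)
        case (Y t c) then show ?thesis by (simp add: xp_def g_def field_simps)
      next
        case (W t c)
        show ?thesis
        proof (cases "W t c \<in> vars Cs A l")
          case False then show ?thesis using W xout by (simp add: xp_def)
        next
          case True
          let ?u = "x (Y t c) - x (Y (Suc t) c)"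
          let ?\<sigma> = "ind (Y t c) - ind (Y (Suc t) c)"
          have xw: "x v = \<bar>?u\<bar>" using wabs[OF True] W by simp
          have xpw: "xp s v = \<bar>?u + s * \<epsilon> * ?\<sigma>\<bar>" for s
            using W True gdiff[of s "Y t c" "Y (Suc t) c"] by (simp add: xp_def)
          show ?thesis
          proof (cases "?\<sigma> = 0")
            case True then show ?thesis using xw xpw by simp
          next
            case False
            then have "ind (Y t c) \<noteq> ind (Y (Suc t) c)" by simp
            from far[OF this] have fr: "\<forall>n\<in>\<int>. \<epsilon> \<le> \<bar>?u - n\<bar>" .
            from fr[rule_format, OF Ints_0] have "\<epsilon> \<le> \<bar>?u\<bar>" by simp
            moreover have "?\<sigma> \<in> {-1,1}" using False indv by auto
            ultimately show ?thesis using abs_avg[OF _ \<epsilon>0] xw xpw by simp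
          qed
        qed
      qed
    qed
    have "xp 1 \<noteq> xp (-1)"
    proof
      assume "xp 1 = xp (-1)"
      then have "xp 1 (Y t0 c0) = xp (-1) (Y t0 c0)" by simp
      then show False using \<epsilon>0 by (simp add: xp_def g_def ind_def \<theta>_def)
    qed
    moreover have "xp 1 = xp (-1)"
    proof -
      have P1: "xp 1 \<in> ?P" by (rule xpP) simp
      have P2: "xp (-1) \<in> ?P" by (rule xpP) simp
      have ext': "\<forall>a\<in>?P. \<forall>b\<in>?P. \<forall>u::real. 0 < u \<and> u < 1 \<and> x = (\<lambda>v. u * a v + (1 - u) * b v) \<longrightarrow> a = b"
        using assms(2) unfolding extreme_pt_def by blast
      have cond: "0 < (1/2::real) \<and> (1/2::real) < 1 \<and> x = (\<lambda>v. 1/2 * xp 1 v + (1 - 1/2) * xp (-1) v)"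
      proof (intro conjI)
        show "0 < (1/2::real)" by simp
        show "(1/2::real) < 1" by simp
        show "x = (\<lambda>v. 1/2 * xp 1 v + (1 - 1/2) * xp (-1) v)" by (rule avg)
      qed
      show ?thesis using ext' P1 P2 cond by blast
    qed
    ultimately show False by blast
  qed
  show ?thesis
  proof
    fix v show "x v \<in> \<int>"
    proof (cases v)
      case (Y t c) then show ?thesis using yint by simp
    next
      case (W t c)
      show ?thesis
      proof (cases "W t c \<in> vars Cs A l")
        case True
        have "x (Y t c) - x (Y (Suc t) c) \<in> \<int>" using yint by simp
        moreover have "x (W t c) = \<bar>x (Y t c) - x (Y (Suc t) c)\<bar>" using wabs[OF True] .
        ultimately show ?thesis using W Ints_abs' by simp
      next
        case False then show ?thesis using W xout by simp
      qed
    qed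
  qed
qed

end
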